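(* Let $(X_i,\mathbf{x}_m,X_f)$ be an instance of the three-point Dubins path problem. In any optimal path of type $C_1S_2C_3S_4C_5$, the inverses of (the lines containing) the straight segments $S_2$ and $S_4$ with respect to the circle centered at $\mathbf{x}_m$ with radius $R_{\min}$ are two circles of equal radius.
   Context: A Dubins vehicle moves forward in the plane with unit speed and minimum turning radius $R_{\min}$: $\dot x=\cos\alpha$, $\dot y=\sin\alpha$, $\dot\alpha=u$, $|u|\le 1/R_{\min}$. A configuration is $X=(\mathbf{x},\alpha)$ with heading $\alpha\in[0,2\pi)$. The three-point Dubins path problem: given initial and final configurations $X_i,X_f$ and a midpoint $\mathbf{x}_m$, with pairwise Euclidean distances among $\mathbf{x}_i,\mathbf{x}_m,\mathbf{x}_f$ at least $4R_{\min}$, find a heading at $\mathbf{x}_m$ minimizing the length of the shortest Dubins path from $X_i$ through $\mathbf{x}_m$ with that heading to $X_f$. A path of type $C_1S_2C_3S_4C_5$ consists of minimum-radius arcs $C_1$ (starting at $X_i$), $C_3$ (passing through $\mathbf{x}_m$), $C_5$ (ending at $X_f$), each a left or right turn, connected by straight segments $S_2$ and $S_4$. Circle inversion with respect to the circle of center $O$ and radius $r$ maps $P\neq O$ to the point on ray $OP$ at distance $r^2/|OP|$ from $O$; the inverse of a segment means the inverse of the full line containing it. *)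

theory Defs
  imports "HOL-Analysis.Analysis"
begin

text \<open>A Dubins path of length L
(unit speed, arc-length parametrised on [0,L]) is a position curve p with
p' = cis(alpha t), where the real-valued heading lift alpha is (1/R)-Lipschitz,
i.e. |alpha'| \<le> 1/R almost everywhere (bounded turning rate).\<close>

definition dubins_path :: "real \<Rightarrow> real \<Rightarrow> (real \<Rightarrow> complex) \<Rightarrow> (real \<Rightarrow> real) \<Rightarrow> bool" where
  "dubins_path R L p \<alpha> \<longleftrightarrow> 0 \<le> L \<and>
     (\<forall>t\<in>{0..L}. (p has_vector_derivative cis (\<alpha> t)) (at t within {0..L})) \<and>
     (\<forall>s\<in>{0..L}. \<forall>t\<in>{0..L}. \<bar>\<alpha> s - \<alpha> t\<bar> \<le> \<bar>s - t\<bar> / R)"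

definition three_point_feasible ::
  "real \<Rightarrow> complex \<Rightarrow> real \<Rightarrow> complex \<Rightarrow> complex \<Rightarrow> real \<Rightarrow>
   real \<Rightarrow> (real \<Rightarrow> complex) \<Rightarrow> (real \<Rightarrow> real) \<Rightarrow> bool" where
  "three_point_feasible R xi ai xm xf af L p \<alpha> \<longleftrightarrow>
     dubins_path R L p \<alpha> \<and> p 0 = xi \<and> \<alpha> 0 = ai \<and>
     p L = xf \<and> cis (\<alpha> L) = cis af \<and> (\<exists>tm\<in>{0..L}. p tm = xm)"

definition three_point_optimal ::
  "real \<Rightarrow> complex \<Rightarrow> real \<Rightarrow> complex \<Rightarrow> complex \<Rightarrow> real \<Rightarrow>
   real \<Rightarrow> (real \<Rightarrow> complex) \<Rightarrow> (real \<Rightarrow> real) \<Rightarrow> bool" where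
  "three_point_optimal R xi ai xm xf af L p \<alpha> \<longleftrightarrow>
     three_point_feasible R xi ai xm xf af L p \<alpha> \<and>
     (\<forall>L' p' \<alpha>'. three_point_feasible R xi ai xm xf af L' p' \<alpha>' \<longrightarrow> L \<le> L')"

definition three_point_instance :: "real \<Rightarrow> complex \<Rightarrow> real \<Rightarrow> complex \<Rightarrow> complex \<Rightarrow> real \<Rightarrow> bool" where
  "three_point_instance R xi ai xm xf af \<longleftrightarrow> 0 < R \<and>
     ai \<in> {0..<2*pi} \<and> af \<in> {0..<2*pi} \<and>
     dist xi xm \<ge> 4*R \<and> dist xm xf \<ge> 4*R \<and> dist xi xf \<ge> 4*R"

definition type_CSCSC ::
  "real \<Rightarrow> complex \<Rightarrow> real \<Rightarrow> (real \<Rightarrow> complex) \<Rightarrow> (real \<Rightarrow> real) \<Rightarrow>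
   real \<Rightarrow> real \<Rightarrow> real \<Rightarrow> real \<Rightarrow> bool" where
  "type_CSCSC R xm L p \<alpha> t1 t2 t3 t4 \<longleftrightarrow>
     0 < t1 \<and> t1 < t2 \<and> t2 < t3 \<and> t3 < t4 \<and> t4 < L \<and>
     (\<exists>s1\<in>{-1,1::real}. \<forall>t\<in>{0..t1}. \<alpha> t = \<alpha> 0 + s1 * t / R) \<and>
     (\<forall>t\<in>{t1..t2}. \<alpha> t = \<alpha> t1) \<and>
     (\<exists>s3\<in>{-1,1::real}. \<forall>t\<in>{t2..t3}. \<alpha> t = \<alpha> t2 + s3 * (t - t2) / R) \<and>
     (\<forall>t\<in>{t3..t4}. \<alpha> t = \<alpha> t3) \<and>
     (\<exists>s5\<in>{-1,1::real}. \<forall>t\<in>{t4..L}. \<alpha> t = \<alpha> t4 + s5 * (t - t4) / R) \<and>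
     (\<exists>tm\<in>{t2<..<t3}. p tm = xm)"

definition line_through :: "complex \<Rightarrow> real \<Rightarrow> complex set" where
  "line_through a th = {a + of_real s * cis th | s. True}"

definition inversion :: "complex \<Rightarrow> real \<Rightarrow> complex \<Rightarrow> complex" where
  "inversion c r P = c + of_real (r^2 / (cmod (P - c))^2) * (P - c)"

definition inverse_set :: "complex \<Rightarrow> real \<Rightarrow> complex set \<Rightarrow> complex set" where
  "inverse_set c r S = inversion c r ` (S - {c})"

end

theory Submission
  imports Defs
begin


lemma cis_arctan:
  fixes z :: complex
  assumes "cmod z = 1" "Re z > 0"
  shows "cis (arctan (Im z / Re z)) = z"
proof -
  have n: "(Re z)^2 + (Im z)^2 = 1" using assms(1) by (simp add: cmod_def)
  have "sqrt (1 + (Im z / Re z)^2) = 1 / Re z"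
  proof -
    have "1 + (Im z / Re z)^2 = (1 / Re z)^2" using n assms(2) by (simp add: field_simps power2_eq_square)
    thus ?thesis using assms(2) by simp
  qed
  thus ?thesis using assms(2) by (simp add: cis.ctr cos_arctan sin_arctan complex_eq_iff)
qed

lemma path_diff:
  fixes p G :: "real \<Rightarrow> complex"
  assumes "a \<le> b"
    and "\<And>t. t \<in> {a..b} \<Longrightarrow> (p has_vector_derivative f t) (at t within {a..b})"
    and "\<And>t. t \<in> {a..b} \<Longrightarrow> (G has_vector_derivative f t) (at t within {a..b})"
  shows "p b - p a = G b - G a"
  using fundamental_theorem_of_calculus[OF assms(1,2)] fundamental_theorem_of_calculus[OF assms(1,3)]
    has_integral_unique by blast

lemma arc_deriv:
  assumes "s \<in> {-1,1::real}" "R \<noteq> 0"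
  shows "((\<lambda>t. - (of_real (s*R) * \<i>) * cis (c + s*(t-a)/R)) has_vector_derivative cis (c + s*(t-a)/R)) (at t within S)"
  unfolding has_vector_derivative_def
  apply (rule has_derivative_eq_rhs)
   apply (rule derivative_intros)+
  using assms by (auto intro!: ext simp: field_simps scaleR_conv_of_real)

lemma seg_deriv:
  "((\<lambda>t. of_real (t - a) * cis b) has_vector_derivative cis b) (at t within S)"
  by (auto intro!: derivative_eq_intros)

lemma lip_cont:
  assumes "R > 0" "\<forall>s\<in>S. \<forall>t\<in>S. \<bar>f s - f t\<bar> \<le> \<bar>s - t\<bar> / R"
  shows "continuous_on S (f :: real \<Rightarrow> real)"
proof -
  have "(1/R)-lipschitz_on S f"
    using assms by (auto intro!: lipschitz_onI simp: dist_real_def field_simps)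
  thus ?thesis using lipschitz_on_continuous_on by blast
qed



definition clp :: "real \<Rightarrow> real \<Rightarrow> real" where "clp x m = max 0 (min x m)"

lemma clp_mono: "s \<le> t \<Longrightarrow> m \<ge> 0 \<Longrightarrow> clp s m \<le> clp t m"
  by (auto simp: clp_def)

lemma clp_sum:
  assumes "s \<le> t" "0 \<le> T1" "T1 \<le> E2" "0 \<le> T3" "E2 + T3 \<le> E4" "0 \<le> T5"
  shows "(clp t T1 - clp s T1) + (clp (t-E2) T3 - clp (s-E2) T3) + (clp (t-E4) T5 - clp (s-E4) T5) \<le> t - s"
  using assms unfolding clp_def max_def min_def by (simp split: if_splits)



lemma dubins_diff:
  assumes "dubins_path R L p \<alpha>" "0 \<le> a" "a \<le> b" "b \<le> L"
    and "\<And>t. t \<in> {a..b} \<Longrightarrow> (G has_vector_derivative cis (\<alpha> t)) (at t within {a..b})"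
  shows "p b - p a = G b - G a"
proof (rule path_diff[OF assms(3) _ assms(5)])
  fix t assume t: "t \<in> {a..b}"
  hence "(p has_vector_derivative cis (\<alpha> t)) (at t within {0..L})" using assms(1-4) unfolding dubins_path_def by auto
  thus "(p has_vector_derivative cis (\<alpha> t)) (at t within {a..b})"
    by (rule has_vector_derivative_within_subset) (use assms in auto)
qed

lemma feasible_from_heading:
  assumes "R > 0" "0 \<le> L" "\<forall>s\<in>{0..L}. \<forall>t\<in>{0..L}. \<bar>\<beta> s - \<beta> t\<bar> \<le> \<bar>s - t\<bar> / R"
    and "\<beta> 0 = ai" "cis (\<beta> L) = cis af"
    and P: "P = (\<lambda>t. xi + integral {0..t} (\<lambda>u. cis (\<beta> u)))"
    and "P L = xf" "tm \<in> {0..L}" "P tm = xm"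
  shows "three_point_feasible R xi ai xm xf af L P \<beta>"
proof -
  have c: "continuous_on {0..L} \<beta>" using lip_cont assms(1,3) by blast
  have cc: "continuous_on {0..L} (\<lambda>u. cis (\<beta> u))"
    unfolding cis_conv_exp by (intro continuous_intros c)
  have "dubins_path R L P \<beta>"
    unfolding dubins_path_def
  proof (intro conjI ballI)
    fix t assume t: "t \<in> {0..L}"
    show "(P has_vector_derivative cis (\<beta> t)) (at t within {0..L})"
      unfolding P using integral_has_vector_derivative[OF cc t]
      by (auto intro!: derivative_eq_intros)
  qed (use assms in auto)
  moreover have "P 0 = xi" using P by simp
  ultimately show ?thesis unfolding three_point_feasible_def using assms by blast
qed

definition hdg :: "real \<Rightarrow> real \<Rightarrow> real \<Rightarrow> real \<Rightarrow> real \<Rightarrow> real \<Rightarrow> real \<Rightarrow> real \<Rightarrow> real \<Rightarrow> real \<Rightarrow> real \<Rightarrow> real" where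
  "hdg R a0 s1 s3 s5 T1 E2 T3 E4 T5 t = a0 + (s1 * clp t T1 + s3 * clp (t - E2) T3 + s5 * clp (t - E4) T5) / R"

lemma hd_lip:
  assumes "R > 0" "s1 \<in> {-1,1}" "s3 \<in> {-1,1}" "s5 \<in> {-1,1}"
    "0 \<le> T1" "T1 \<le> E2" "0 \<le> T3" "E2 + T3 \<le> E4" "0 \<le> T5"
  shows "\<bar>hdg R a0 s1 s3 s5 T1 E2 T3 E4 T5 s - hdg R a0 s1 s3 s5 T1 E2 T3 E4 T5 t\<bar> \<le> \<bar>s - t\<bar> / R"
proof -
  have key: "\<bar>hdg R a0 s1 s3 s5 T1 E2 T3 E4 T5 s - hdg R a0 s1 s3 s5 T1 E2 T3 E4 T5 t\<bar> \<le> (t - s) / R"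
    if st: "s \<le> t" for s t
  proof -
    define d1 where "d1 = clp t T1 - clp s T1"
    define d2 where "d2 = clp (t-E2) T3 - clp (s-E2) T3"
    define d3 where "d3 = clp (t-E4) T5 - clp (s-E4) T5"
    have p: "d1 \<ge> 0" "d2 \<ge> 0" "d3 \<ge> 0" unfolding d1_def d2_def d3_def
      using clp_mono assms st by (auto simp: diff_le_eq)
    have sm: "d1 + d2 + d3 \<le> t - s" unfolding d1_def d2_def d3_def using clp_sum[OF st] assms by auto
    have "hdg R a0 s1 s3 s5 T1 E2 T3 E4 T5 t - hdg R a0 s1 s3 s5 T1 E2 T3 E4 T5 s = (s1*d1 + s3*d2 + s5*d3)/R"
      unfolding hdg_def d1_def d2_def d3_def using assms(1) by (simp add: field_simps)
    moreover have "\<bar>s1*d1 + s3*d2 + s5*d3\<bar> \<le> d1 + d2 + d3"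
      using assms(2-4) p by auto
    ultimately have "\<bar>hdg R a0 s1 s3 s5 T1 E2 T3 E4 T5 s - hdg R a0 s1 s3 s5 T1 E2 T3 E4 T5 t\<bar>
       = \<bar>s1*d1 + s3*d2 + s5*d3\<bar> / R" using assms(1) by (metis abs_minus_commute abs_divide abs_of_pos)
    also have "\<dots> \<le> (t - s) / R" using sm assms(1) \<open>\<bar>s1*d1 + s3*d2 + s5*d3\<bar> \<le> d1 + d2 + d3\<close>
      by (intro divide_right_mono) auto
    finally show ?thesis .
  qed
  show ?thesis
  proof (cases "s \<le> t")
    case True thus ?thesis using key[OF True] by simp
  next
    case False thus ?thesis using key[of t s] by (simp add: abs_minus_commute)
  qed
qed



lemma cmod_eq_sq: "r \<ge> 0 \<Longrightarrow> (Re z)^2 + (Im z)^2 = r^2 \<Longrightarrow> cmod z = r"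
  by (simp add: cmod_def)

lemma inv_std:
  fixes r b :: real
  assumes "r > 0" "b \<noteq> 0"
  shows "(\<lambda>u. of_real (r^2 / (cmod u)^2) * u) ` {u. Im u = b}
       = sphere (\<i> * of_real (r^2/(2*b))) (r^2/(2*\<bar>b\<bar>)) - {0}"
proof (intro equalityI subsetI)
  fix y assume "y \<in> (\<lambda>u. of_real (r^2 / (cmod u)^2) * u) ` {u. Im u = b}"
  then obtain u where u: "Im u = b" "y = of_real (r^2 / (cmod u)^2) * u" by auto
  define x where "x = Re u"
  have n: "(cmod u)^2 = x^2 + b^2" using u by (simp add: cmod_def x_def)
  have pos: "x^2 + b^2 > 0" using assms(2) by (simp add: add_nonneg_pos)
  have ry: "Re y = r^2 * x / (x^2+b^2)" "Im y = r^2 * b / (x^2+b^2)" using u n by (auto simp: x_def)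
  have "cmod (\<i> * of_real (r^2/(2*b)) - y) = r^2/(2*\<bar>b\<bar>)"
  proof (rule cmod_eq_sq)
    show "(Re (\<i> * of_real (r^2/(2*b)) - y))^2 + (Im (\<i> * of_real (r^2/(2*b)) - y))^2 = (r^2/(2*\<bar>b\<bar>))^2"
    proof -
      have a: "(r^2/(2*\<bar>b\<bar>))^2 = (r^2/(2*b))^2" by (simp add: power_divide power_mult_distrib)
      define q where "q = x^2 + b^2"
      have q0: "q \<noteq> 0" using pos q_def by linarith
      have qx: "x^2 = q - b^2" using q_def by simp
      have "Re (\<i> * of_real (r^2/(2*b)) - y) = - (r^2*x/q)" "Im (\<i> * of_real (r^2/(2*b)) - y) = r^2/(2*b) - r^2*b/q"
        using ry q_def by auto
      moreover have "(r^2*x/q)^2 + (r^2/(2*b) - r^2*b/q)^2 = (r^2/(2*b))^2"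
      proof -
        have "(r^2*x/q)^2 + (r^2/(2*b) - r^2*b/q)^2 = (r^2/(2*b))^2 + (r^2/q)^2 * (x^2 + b^2) - (r^2/q)^2 * q"
          using q0 assms(2) by (simp add: power2_diff power_divide field_simps power2_eq_square)
        thus ?thesis using q_def by simp
      qed
      ultimately show ?thesis unfolding a by simp
    qed
  qed simp
  moreover have "y \<noteq> 0" using ry assms pos by auto
  ultimately show "y \<in> sphere (\<i> * of_real (r^2/(2*b))) (r^2/(2*\<bar>b\<bar>)) - {0}" by (simp add: dist_norm)
next
  fix y assume y: "y \<in> sphere (\<i> * of_real (r^2/(2*b))) (r^2/(2*\<bar>b\<bar>)) - {0}"
  define X where "X = Re y" define Y where "Y = Im y"
  have "y \<noteq> 0" using y by auto
  hence y0: "X^2 + Y^2 > 0" unfolding X_def Y_def using complex_neq_0 by blast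
  have "(cmod (\<i> * of_real (r^2/(2*b)) - y))^2 = (r^2/(2*\<bar>b\<bar>))^2" using y by (simp add: dist_norm)
  hence "X^2 + (r^2/(2*b) - Y)^2 = (r^2/(2*\<bar>b\<bar>))^2" by (simp add: cmod_def X_def Y_def power2_eq_square)
  moreover have "(r^2/(2*\<bar>b\<bar>))^2 = (r^2/(2*b))^2" by (simp add: power_divide power_mult_distrib)
  ultimately have "X^2 + (r^2/(2*b))^2 - 2*(r^2/(2*b))*Y + Y^2 = (r^2/(2*b))^2" by (simp add: power2_diff)
  hence "X^2 + Y^2 = 2*(r^2/(2*b))*Y" by linarith
  hence eq: "X^2 + Y^2 = r^2 * Y / b" using assms(2) by simp
  define n where "n = X^2 + Y^2"
  have n0: "n > 0" using y0 n_def by simp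
  define u where "u = of_real (r^2/n) * y"
  have Yb: "Y \<noteq> 0" using eq y0 by auto
  have imu: "Im u = b"
  proof -
    have "Im u = r^2 * Y / n" by (simp add: u_def Y_def)
    also have "\<dots> = b" unfolding n_def eq using Yb assms by simp
    finally show ?thesis .
  qed
  have cy: "(cmod y)^2 = n" by (simp add: n_def X_def Y_def cmod_def)
  have nu: "(cmod u)^2 = r^4 / n"
  proof -
    have "(cmod u)^2 = (r^2/n)^2 * (cmod y)^2" unfolding u_def norm_mult norm_of_real using n0 by (simp add: power_mult_distrib power_divide)
    also have "\<dots> = r^4/n" using n0 unfolding cy by (simp add: power2_eq_square power4_eq_xxxx)
    finally show ?thesis .
  qed
  have "of_real (r^2 / (cmod u)^2) * u = of_real (r^2 / (r^4/n)) * u" using nu by simp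
  also have "\<dots> = of_real ((r^2 / (r^4/n)) * (r^2/n)) * y" by (simp add: u_def)
  also have "(r^2 / (r^4/n)) * (r^2/n) = 1" using n0 assms(1) by (simp add: power2_eq_square power4_eq_xxxx)
  finally have "of_real (r^2 / (cmod u)^2) * u = y" by simp
  thus "y \<in> (\<lambda>u. of_real (r^2 / (cmod u)^2) * u) ` {u. Im u = b}" using imu by force
qed


lemma dist_rot: "dist (c + cis t * a) (c + cis t * u) = dist a u"
proof -
  have "(c + cis t * a) - (c + cis t * u) = cis t * (a - u)" by (simp add: algebra_simps)
  thus ?thesis by (simp add: dist_norm norm_mult)
qed

lemma inv_line:
  fixes c P :: complex and r \<beta> b :: real
  assumes r: "r > 0" and b: "b = Im (cnj (cis \<beta>) * (P - c))" "b \<noteq> 0"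
  shows "inverse_set c r (line_through P \<beta>) = sphere (c + cis \<beta> * (\<i> * of_real (r^2/(2*b)))) (r^2/(2*\<bar>b\<bar>)) - {c}"
proof -
  define w where "w = cis \<beta>"
  have w1: "cnj w * w = 1" "w * cnj w = 1" unfolding w_def by (simp_all add: cis_cnj cis_mult)
  define \<phi> where "\<phi> u = c + w * u" for u
  have \<phi>inv: "\<phi> (cnj w * (y - c)) = y" for y
  proof -
    have "c + w * (cnj w * (y - c)) = c + (w * cnj w) * (y - c)" by (simp only: mult.assoc)
    also have "\<dots> = y" using w1(2) by simp
    finally show ?thesis unfolding \<phi>_def .
  qed
  have \<phi>n: "cmod (\<phi> u - c) = cmod u" for u unfolding \<phi>_def w_def by (simp add: norm_mult)
  have line: "line_through P \<beta> = \<phi> ` {u. Im u = b}"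
  proof (intro equalityI subsetI)
    fix z assume "z \<in> line_through P \<beta>"
    then obtain s where z: "z = P + of_real s * w" unfolding line_through_def w_def by auto
    have "z = \<phi> (cnj w * (P - c) + of_real s)" unfolding \<phi>_def z using w1
      by (simp add: algebra_simps)
    moreover have "Im (cnj w * (P - c) + of_real s) = b" using b unfolding w_def by simp
    ultimately show "z \<in> \<phi> ` {u. Im u = b}" by blast
  next
    fix z assume "z \<in> \<phi> ` {u. Im u = b}"
    then obtain u where u: "Im u = b" "z = \<phi> u" by auto
    define s where "s = Re u - Re (cnj w * (P - c))"
    have "u = cnj w * (P - c) + of_real s" using u b unfolding s_def w_def by (simp add: complex_eq_iff)
    have "c + w * (cnj w * (P - c) + of_real s) = c + (w * cnj w) * (P - c) + of_real s * w" by (simp add: algebra_simps)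
    also have "\<dots> = P + of_real s * w" using w1(2) by simp
    finally have "z = P + of_real s * w" unfolding u(2) \<phi>_def \<open>u = _\<close> .
    thus "z \<in> line_through P \<beta>" unfolding line_through_def w_def by auto
  qed
  have cnot: "c \<notin> \<phi> ` {u. Im u = b}"
  proof
    assume "c \<in> \<phi> ` {u. Im u = b}"
    then obtain u where "Im u = b" "c = \<phi> u" by auto
    hence "cmod u = 0" using \<phi>n[of u] by simp
    thus False using \<open>Im u = b\<close> b by auto
  qed
  have inv: "inversion c r (\<phi> u) = \<phi> (of_real (r^2 / (cmod u)^2) * u)" for u
    unfolding inversion_def \<phi>n by (simp add: \<phi>_def algebra_simps)
  have "inverse_set c r (line_through P \<beta>) = \<phi> ` ((\<lambda>u. of_real (r^2 / (cmod u)^2) * u) ` {u. Im u = b})"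
    unfolding inverse_set_def line using cnot by (auto simp: inv image_iff)
  also have "\<dots> = \<phi> ` (sphere (\<i> * of_real (r^2/(2*b))) (r^2/(2*\<bar>b\<bar>)) - {0})"
    using inv_std[OF r b(2)] by simp
  also have "\<dots> = sphere (c + cis \<beta> * (\<i> * of_real (r^2/(2*b)))) (r^2/(2*\<bar>b\<bar>)) - {c}"
  proof (intro equalityI subsetI)
    fix y assume "y \<in> \<phi> ` (sphere (\<i> * of_real (r^2/(2*b))) (r^2/(2*\<bar>b\<bar>)) - {0})"
    then obtain u where u: "u \<in> sphere (\<i> * of_real (r^2/(2*b))) (r^2/(2*\<bar>b\<bar>))" "u \<noteq> 0" "y = \<phi> u" by blast
    have "dist (c + cis \<beta> * (\<i> * of_real (r^2/(2*b)))) y = dist (\<i> * of_real (r^2/(2*b))) u"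
      unfolding u(3) \<phi>_def w_def by (rule dist_rot)
    moreover have "y \<noteq> c" using \<phi>n[of u] u by auto
    ultimately show "y \<in> sphere (c + cis \<beta> * (\<i> * of_real (r^2/(2*b)))) (r^2/(2*\<bar>b\<bar>)) - {c}" using u by simp
  next
    fix y assume y: "y \<in> sphere (c + cis \<beta> * (\<i> * of_real (r^2/(2*b)))) (r^2/(2*\<bar>b\<bar>)) - {c}"
    define u where "u = cnj w * (y - c)"
    have yu: "y = \<phi> u" using \<phi>inv u_def by simp
    have "dist (c + cis \<beta> * (\<i> * of_real (r^2/(2*b)))) y = dist (\<i> * of_real (r^2/(2*b))) u"
      unfolding yu \<phi>_def w_def by (rule dist_rot)
    moreover have "u \<noteq> 0" using y yu \<phi>_def by auto
    ultimately show "y \<in> \<phi> ` (sphere (\<i> * of_real (r^2/(2*b))) (r^2/(2*\<bar>b\<bar>)) - {0})" using y yu by auto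
  qed
  finally show ?thesis .
qed



lemma tan_deriv_real:
  fixes x y :: "real \<Rightarrow> real" and \<kappa> x' y' :: real
  assumes dx: "(x has_real_derivative x') (at 0)" and dy: "(y has_real_derivative y') (at 0)"
    and pos: "(x 0)^2 + (y 0)^2 - \<kappa>^2 > 0"
  defines "l \<equiv> \<lambda>e. sqrt ((x e)^2 + (y e)^2 - \<kappa>^2)"
  defines "U \<equiv> \<lambda>e. x e * l e + y e * \<kappa>"
  defines "V \<equiv> \<lambda>e. y e * l e - x e * \<kappa>"
  defines "c \<equiv> U 0 / ((x 0)^2 + (y 0)^2)"
  defines "s \<equiv> V 0 / ((x 0)^2 + (y 0)^2)"
  shows "((\<lambda>e. l e - \<kappa> * arctan ((V e * c - U e * s) / (U e * c + V e * s))) has_real_derivative (c*x' + s*y')) (at 0)"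
proof -
  define n0 where "n0 = (x 0)^2 + (y 0)^2"
  define l0 where "l0 = l 0"
  have l0p: "l0 > 0" using pos unfolding l0_def l_def by simp
  have l0sq: "l0^2 = n0 - \<kappa>^2" using pos unfolding l0_def l_def n0_def by simp
  have n0e: "n0 = l0^2 + \<kappa>^2" using l0sq by simp
  have n0p: "n0 > 0" unfolding n0e using l0p by (simp add: add_pos_nonneg)
  define lp where "lp = (x 0 * x' + y 0 * y') / l0"
  have dg: "((\<lambda>e. (x e)^2 + (y e)^2 - \<kappa>^2) has_real_derivative (2*x 0*x' + 2*y 0*y')) (at 0)"
    by (auto intro!: derivative_eq_intros dx dy)
  have dl: "(l has_real_derivative lp) (at 0)"
    unfolding l_def
    apply (rule DERIV_cong[OF DERIV_chain2[OF DERIV_real_sqrt dg]])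
    using pos l0p unfolding lp_def l0_def l_def by (auto simp: field_simps)
  define U' where "U' = x' * l0 + x 0 * lp + y' * \<kappa>"
  define V' where "V' = y' * l0 + y 0 * lp - x' * \<kappa>"
  have dU: "(U has_real_derivative U') (at 0)" unfolding U_def U'_def l0_def
    by (auto intro!: derivative_eq_intros dx dy dl)
  have dV: "(V has_real_derivative V') (at 0)" unfolding V_def V'_def l0_def
    by (auto intro!: derivative_eq_intros dx dy dl)
  have "(U 0)^2 + (V 0)^2 = ((x 0)^2+(y 0)^2)*(l0^2+\<kappa>^2)"
    unfolding U_def V_def l0_def by (simp add: power2_eq_square algebra_simps)
  hence UV: "(U 0)^2 + (V 0)^2 = n0 * n0" using n0e n0_def by simp
  define N where "N e = V e * c - U e * s" for e
  define M where "M e = U e * c + V e * s" for e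
  have cn: "c = U 0 / n0" "s = V 0 / n0" unfolding c_def s_def n0_def by simp_all
  have N0: "N 0 = 0" unfolding N_def cn by (simp add: field_simps)
  have M0: "M 0 = n0" unfolding M_def cn using UV n0p by (simp add: field_simps power2_eq_square)
  define N' where "N' = V' * c - U' * s"
  define M' where "M' = U' * c + V' * s"
  have dN: "(N has_real_derivative N') (at 0)" unfolding N_def[abs_def] N'_def
    by (auto intro!: derivative_eq_intros dU dV)
  have dM: "(M has_real_derivative M') (at 0)" unfolding M_def[abs_def] M'_def
    by (auto intro!: derivative_eq_intros dU dV)
  have da: "((\<lambda>e. arctan (N e / M e)) has_real_derivative N' / n0) (at 0)"
    apply (rule DERIV_cong[OF DERIV_chain2[OF DERIV_arctan DERIV_divide[OF dN dM]]])
    using M0 N0 n0p by (auto simp: field_simps)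
  have dt: "((\<lambda>e. l e - \<kappa> * arctan (N e / M e)) has_real_derivative lp - \<kappa> * (N' / n0)) (at 0)"
    by (intro DERIV_diff DERIV_cmult dl da)
  have fin: "lp - \<kappa> * (N' / n0) = c*x' + s*y'"
  proof -
    have "lp - \<kappa> * (N' / n0) - (c*x' + s*y') = 0"
      unfolding lp_def N'_def U'_def V'_def cn U_def V_def l0_def[symmetric] using l0p n0p
      apply (simp add: field_simps)
      using l0sq n0_def by algebra
    thus ?thesis by simp
  qed
  show ?thesis using dt unfolding fin N_def M_def .
qed


lemma ratio_aux:
  fixes a b :: complex
  shows "Im (a / b) / Re (a / b) = (Im a * Re b - Re a * Im b) / (Re a * Re b + Im a * Im b)"
proof (cases "(Re b)^2 + (Im b)^2 = 0")
  case True
  hence "Re b = 0" "Im b = 0" by (simp_all add: sum_power2_eq_zero_iff)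
  thus ?thesis by (simp add: Re_divide Im_divide)
next
  case False
  thus ?thesis by (simp add: Re_divide Im_divide)
qed

lemma tan_deriv_c:
  fixes D :: "real \<Rightarrow> complex" and \<kappa> :: real
  assumes dD: "(D has_vector_derivative D') (at 0)" and pos: "(cmod (D 0))^2 - \<kappa>^2 > 0"
  defines "lL \<equiv> \<lambda>e. sqrt ((cmod (D e))^2 - \<kappa>^2)"
  defines "w0 \<equiv> D 0 / (of_real (lL 0) + \<i> * of_real \<kappa>)"
  defines "q \<equiv> \<lambda>e. D e / ((of_real (lL e) + \<i> * of_real \<kappa>) * w0)"
  shows "((\<lambda>e. lL e - \<kappa> * arctan (Im (q e) / Re (q e))) has_real_derivative Re (cnj w0 * D')) (at 0)"
proof -
  define x where "x e = Re (D e)" for e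
  define y where "y e = Im (D e)" for e
  have dx: "(x has_real_derivative Re D') (at 0)" unfolding x_def[abs_def] by (rule has_field_derivative_Re[OF dD])
  have dy: "(y has_real_derivative Im D') (at 0)" unfolding y_def[abs_def] by (rule has_field_derivative_Im[OF dD])
  have cm: "(cmod (D e))^2 = (x e)^2 + (y e)^2" for e by (simp add: x_def y_def cmod_power2)
  have pos': "(x 0)^2 + (y 0)^2 - \<kappa>^2 > 0" using pos cm by simp
  define l where "l = (\<lambda>e. sqrt ((x e)^2 + (y e)^2 - \<kappa>^2))"
  define U where "U = (\<lambda>e. x e * l e + y e * \<kappa>)"
  define V where "V = (\<lambda>e. y e * l e - x e * \<kappa>)"
  define c where "c = U 0 / ((x 0)^2 + (y 0)^2)"
  define s where "s = V 0 / ((x 0)^2 + (y 0)^2)"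
  have ll: "lL = l" unfolding lL_def l_def cm ..
  have n0: "(l 0)^2 + \<kappa>^2 = (x 0)^2 + (y 0)^2" using pos' unfolding l_def by simp
  have n0p: "(x 0)^2 + (y 0)^2 > 0" using pos' by (smt (verit) zero_le_power2)
  have w0: "Re w0 = c" "Im w0 = s"
    unfolding w0_def ll c_def s_def U_def V_def using n0
    by (simp_all add: Re_divide Im_divide x_def y_def algebra_simps)
  have rq: "Im (q e) / Re (q e) = (V e * c - U e * s) / (U e * c + V e * s)" for e
    unfolding q_def ratio_aux ll using w0 
    by (simp add: U_def V_def x_def y_def algebra_simps)
  have "((\<lambda>e. l e - \<kappa> * arctan ((V e * c - U e * s) / (U e * c + V e * s))) has_real_derivative (c * Re D' + s * Im D')) (at 0)"
    unfolding l_def U_def V_def c_def s_def by (rule tan_deriv_real[OF dx dy pos'])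
  moreover have "Re (cnj w0 * D') = c * Re D' + s * Im D'" using w0 by simp
  ultimately show ?thesis unfolding ll rq by simp
qed



lemma int_dubins:
  assumes "R > 0" "0 \<le> L" "\<forall>s\<in>{0..L}. \<forall>t\<in>{0..L}. \<bar>\<beta> s - \<beta> t\<bar> \<le> \<bar>s - t\<bar> / R"
  shows "dubins_path R L (\<lambda>t. xi + integral {0..t} (\<lambda>u. cis (\<beta> u))) \<beta>"
proof -
  have c: "continuous_on {0..L} \<beta>" using lip_cont assms(1,3) by blast
  have cc: "continuous_on {0..L} (\<lambda>u. cis (\<beta> u))"
    unfolding cis_conv_exp by (intro continuous_intros c)
  show ?thesis
    unfolding dubins_path_def
  proof (intro conjI ballI)
    fix t assume t: "t \<in> {0..L}"
    show "((\<lambda>t. xi + integral {0..t} (\<lambda>u. cis (\<beta> u))) has_vector_derivative cis (\<beta> t)) (at t within {0..L})"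
      using integral_has_vector_derivative[OF cc t]
      by (auto intro!: derivative_eq_intros)
  qed (use assms in auto)
qed

lemma arc_piece:
  assumes "dubins_path R L p \<beta>" "0 \<le> a" "a \<le> b" "b \<le> L" "s \<in> {-1,1}" "R \<noteq> 0"
    and "\<And>t. t \<in> {a..b} \<Longrightarrow> \<beta> t = c + s*(t-a)/R"
  shows "p b - p a = - (of_real (s*R) * \<i>) * (cis (c + s*(b-a)/R) - cis c)"
proof -
  have "p b - p a = (- (of_real (s*R) * \<i>) * cis (c + s*(b-a)/R)) - (- (of_real (s*R) * \<i>) * cis (c + s*(a-a)/R))"
    by (rule dubins_diff[OF assms(1-4)], subst assms(7), assumption, rule arc_deriv[OF assms(5,6)])
  thus ?thesis by (simp add: algebra_simps)
qed

lemma seg_piece: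
  assumes "dubins_path R L p \<beta>" "0 \<le> a" "a \<le> b" "b \<le> L"
    and "\<And>t. t \<in> {a..b} \<Longrightarrow> \<beta> t = c"
  shows "p b - p a = of_real (b - a) * cis c"
proof -
  have "p b - p a = of_real (b - a) * cis c - of_real (a - a) * cis c"
    by (rule dubins_diff[OF assms(1-4)], subst assms(5), assumption, rule seg_deriv)
  thus ?thesis by simp
qed


lemma build_path:
  fixes xi xm xf O1 O3 O5 :: complex
  assumes R: "R > 0" and s: "s1 \<in> {-1,1}" "s3 \<in> {-1,1}" "s5 \<in> {-1,1}"
    and O1: "O1 = xi + of_real (s1*R) * \<i> * cis a0"
    and O5: "O5 = xf + of_real (s5*R) * \<i> * cis cf"
    and t2: "O3 - O1 = (of_real l2 + \<i> * of_real ((s3 - s1)*R)) * cis \<beta>2"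
    and t4: "O5 - O3 = (of_real l4 + \<i> * of_real ((s5 - s3)*R)) * cis \<beta>4"
    and xm: "xm = O3 - of_real (s3*R) * \<i> * cis \<gamma>"
    and nn: "0 \<le> T1" "0 \<le> l2" "0 \<le> T3" "0 \<le> l4" "0 \<le> T5"
    and b2: "\<beta>2 = a0 + s1*T1/R" and b4: "\<beta>4 = \<beta>2 + s3*T3/R" and cf: "cf = \<beta>4 + s5*T5/R"
    and g: "\<gamma> = \<beta>2 + s3*\<mu>/R" "0 \<le> \<mu>" "\<mu> \<le> T3"
    and caf: "cis cf = cis af"
  shows "\<exists>P \<beta>. three_point_feasible R xi a0 xm xf af (T1 + l2 + T3 + l4 + T5) P \<beta>"
proof -
  define E2 where "E2 = T1 + l2"
  define E4 where "E4 = E2 + T3 + l4"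
  define Lp where "Lp = E4 + T5"
  have Lp: "Lp = T1 + l2 + T3 + l4 + T5" unfolding Lp_def E4_def E2_def by simp
  define \<beta> where "\<beta> = hdg R a0 s1 s3 s5 T1 E2 T3 E4 T5"
  define P where "P = (\<lambda>t. xi + integral {0..t} (\<lambda>u. cis (\<beta> u)))"
  have lip: "\<forall>s\<in>{0..Lp}. \<forall>t\<in>{0..Lp}. \<bar>\<beta> s - \<beta> t\<bar> \<le> \<bar>s - t\<bar> / R"
    unfolding \<beta>_def using hd_lip[OF R s] nn unfolding E2_def E4_def by auto
  have Lp0: "0 \<le> Lp" using nn unfolding Lp_def E4_def E2_def by simp
  have dp: "dubins_path R Lp P \<beta>" unfolding P_def by (rule int_dubins[OF R Lp0 lip])
  have R0: "R \<noteq> 0" using R by simp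
  have e: "0 \<le> T1" "T1 \<le> E2" "E2 \<le> E2 + \<mu>" "E2 + \<mu> \<le> E2 + T3" "E2 + T3 \<le> E4" "E4 \<le> Lp"
    using nn g unfolding E2_def E4_def Lp_def by auto
  have p1: "P T1 - P 0 = - (of_real (s1*R) * \<i>) * (cis (a0 + s1*(T1-0)/R) - cis a0)"
    by (rule arc_piece[OF dp _ _ _ s(1) R0]) (use e in \<open>auto simp: \<beta>_def hdg_def clp_def E2_def E4_def\<close>)
  have p2: "P E2 - P T1 = of_real (E2 - T1) * cis \<beta>2"
    by (rule seg_piece[OF dp]) (use e nn R0 in \<open>auto simp: \<beta>_def hdg_def clp_def E4_def b2 field_simps\<close>)
  have p3: "P (E2+\<mu>) - P E2 = - (of_real (s3*R) * \<i>) * (cis (\<beta>2 + s3*((E2+\<mu>)-E2)/R) - cis \<beta>2)"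
    by (rule arc_piece[OF dp _ _ _ s(2) R0]) (use e nn R0 in \<open>auto simp: \<beta>_def hdg_def clp_def E4_def b2 field_simps\<close>)
  have p3': "P (E2+T3) - P E2 = - (of_real (s3*R) * \<i>) * (cis (\<beta>2 + s3*((E2+T3)-E2)/R) - cis \<beta>2)"
    by (rule arc_piece[OF dp _ _ _ s(2) R0]) (use e nn R0 in \<open>auto simp: \<beta>_def hdg_def clp_def E4_def b2 field_simps\<close>)
  have p4: "P E4 - P (E2+T3) = of_real (E4 - (E2+T3)) * cis \<beta>4"
    by (rule seg_piece[OF dp]) (use e nn R0 in \<open>auto simp: \<beta>_def hdg_def clp_def E4_def b2 b4 field_simps\<close>)
  have p5: "P Lp - P E4 = - (of_real (s5*R) * \<i>) * (cis (\<beta>4 + s5*(Lp-E4)/R) - cis \<beta>4)"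
    by (rule arc_piece[OF dp _ _ _ s(3) R0]) (use e nn R0 in \<open>auto simp: \<beta>_def hdg_def clp_def E4_def Lp_def b2 b4 field_simps\<close>)
  have P0: "P 0 = xi" unfolding P_def by simp
  have a2: "a0 + s1*(T1-0)/R = \<beta>2" using b2 by simp
  have O3: "O3 = xi + of_real (s1*R) * \<i> * cis a0 + (of_real l2 + \<i> * of_real ((s3 - s1)*R)) * cis \<beta>2"
    using t2 O1 by (simp add: algebra_simps)
  have PE2: "P E2 = O3 - of_real (s3*R) * \<i> * cis \<beta>2"
  proof -
    have "P E2 = xi - (of_real (s1*R) * \<i>) * (cis \<beta>2 - cis a0) + of_real l2 * cis \<beta>2"
      using p1 p2 P0 unfolding a2 E2_def by (simp add: algebra_simps)
    thus ?thesis unfolding O3 by (simp add: algebra_simps)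
  qed
  have Pm: "P (E2+\<mu>) = xm"
  proof -
    have gg: "\<beta>2 + s3*((E2+\<mu>)-E2)/R = \<gamma>" using g by simp
    have "P (E2+\<mu>) = P E2 + (P (E2+\<mu>) - P E2)" by simp
    also have "\<dots> = xm" by (simp only: p3 gg) (simp add: PE2 xm algebra_simps)
    finally show ?thesis .
  qed
  have PE3: "P (E2+T3) = O3 - of_real (s3*R) * \<i> * cis \<beta>4"
  proof -
    have gg: "\<beta>2 + s3*((E2+T3)-E2)/R = \<beta>4" using b4 by simp
    have "P (E2+T3) = P E2 + (P (E2+T3) - P E2)" by simp
    also have "\<dots> = O3 - of_real (s3*R) * \<i> * cis \<beta>4" by (simp only: p3' gg) (simp add: PE2 algebra_simps)
    finally show ?thesis .
  qed
  have O5': "O5 = O3 + (of_real l4 + \<i> * of_real ((s5 - s3)*R)) * cis \<beta>4" using t4 by (simp add: algebra_simps)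
  have PE4: "P E4 = O5 - of_real (s5*R) * \<i> * cis \<beta>4"
  proof -
    have "E4 - (E2+T3) = l4" unfolding E4_def by simp
    have "P E4 = P (E2+T3) + (P E4 - P (E2+T3))" by simp
    also have "\<dots> = O5 - of_real (s5*R) * \<i> * cis \<beta>4" by (simp only: p4) (simp add: PE3 O5' \<open>E4 - (E2+T3) = l4\<close> algebra_simps)
    finally show ?thesis .
  qed
  have PL: "P Lp = xf"
  proof -
    have gg: "\<beta>4 + s5*(Lp-E4)/R = cf" using cf unfolding Lp_def by simp
    have "P Lp = P E4 + (P Lp - P E4)" by simp
    also have "\<dots> = xf" by (simp only: p5 gg) (simp add: PE4 O5 algebra_simps)
    finally show ?thesis .
  qed
  have \<beta>0: "\<beta> 0 = a0" using e nn unfolding \<beta>_def hdg_def clp_def E4_def by auto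
  have \<beta>L: "\<beta> Lp = cf" using e nn R unfolding \<beta>_def hdg_def clp_def Lp_def cf b4 b2 E4_def E2_def
    by (auto simp: field_simps)
  have "three_point_feasible R xi a0 xm xf af Lp P \<beta>"
    unfolding three_point_feasible_def using dp P0 \<beta>0 PL \<beta>L caf Pm e by auto
  thus ?thesis unfolding Lp by blast
qed



lemma rot_deriv: "((\<lambda>e. c0 + cis e * A) has_vector_derivative (\<i> * A)) (at 0)"
  unfolding has_vector_derivative_def
  apply (rule has_derivative_eq_rhs)
   apply (rule derivative_intros)+
  by (auto intro!: ext simp: algebra_simps scaleR_conv_of_real)

lemma rot_deriv': "((\<lambda>e. c0 - cis e * A) has_vector_derivative (- (\<i> * A))) (at 0)"
  unfolding has_vector_derivative_def
  apply (rule has_derivative_eq_rhs)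
   apply (rule derivative_intros)+
  by (auto intro!: ext simp: algebra_simps scaleR_conv_of_real)

lemma ev_pos: "isCont f 0 \<Longrightarrow> (f 0::real) > 0 \<Longrightarrow> eventually (\<lambda>e. f e > 0) (at 0)"
  unfolding isCont_def by (rule order_tendstoD(1)) auto

lemma sgn_sq: "s \<in> {-1,1::real} \<Longrightarrow> s * s = 1" by auto

lemma tangent_data:
  fixes D :: complex and \<kappa> :: real and w0 :: complex
  assumes pos: "(cmod D)^2 - \<kappa>^2 > 0" and w0: "cmod w0 = 1"
  defines "l \<equiv> sqrt ((cmod D)^2 - \<kappa>^2)"
  defines "q \<equiv> D / ((of_real l + \<i> * of_real \<kappa>) * w0)"
  assumes re: "Re q > 0"
  shows "D = (of_real l + \<i> * of_real \<kappa>) * (w0 * cis (arctan (Im q / Re q)))" "l > 0"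
proof -
  have lp: "l > 0" using pos unfolding l_def by simp
  have nz: "of_real l + \<i> * of_real \<kappa> \<noteq> 0" using lp by (simp add: complex_eq_iff)
  have "cmod (of_real l + \<i> * of_real \<kappa>) = sqrt (l^2 + \<kappa>^2)" by (simp add: cmod_def)
  also have "l^2 + \<kappa>^2 = (cmod D)^2" using pos unfolding l_def by simp
  finally have nl: "cmod (of_real l + \<i> * of_real \<kappa>) = cmod D" by simp
  have q1: "cmod q = 1" unfolding q_def using nl w0 nz lp pos
    by (simp add: norm_divide norm_mult) (metis less_numeral_extra(3) nl norm_zero zero_less_norm_iff)
  have cq: "cis (arctan (Im q / Re q)) = q" by (rule cis_arctan[OF q1 re])
  have Z: "(of_real l + \<i> * of_real \<kappa>) * w0 \<noteq> 0" using nz w0 by auto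
  have "(of_real l + \<i> * of_real \<kappa>) * (w0 * cis (arctan (Im q / Re q))) = ((of_real l + \<i> * of_real \<kappa>) * w0) * q"
    unfolding cq by (simp add: mult.assoc)
  also have "\<dots> = D" unfolding q_def using Z by simp
  finally show "D = (of_real l + \<i> * of_real \<kappa>) * (w0 * cis (arctan (Im q / Re q)))" by simp
  show "l > 0" by (rule lp)
qed



theorem lemma2:
  fixes R ai af L t1 t2 t3 t4 :: real and xi xm xf :: complex
    and p :: "real \<Rightarrow> complex" and \<alpha> :: "real \<Rightarrow> real"
  assumes "three_point_instance R xi ai xm xf af"
    and "three_point_optimal R xi ai xm xf af L p \<alpha>"
    and "type_CSCSC R xm L p \<alpha> t1 t2 t3 t4"
  shows "\<exists>c2 c4 \<rho>. 0 < \<rho> \<and>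
           inverse_set xm R (line_through (p t1) (\<alpha> t1)) = sphere c2 \<rho> - {xm} \<and>
           inverse_set xm R (line_through (p t3) (\<alpha> t3)) = sphere c4 \<rho> - {xm}"
proof -
  have R: "R > 0" using assms(1) unfolding three_point_instance_def by auto
  have R0: "R \<noteq> 0" using R by simp
  have dp: "dubins_path R L p \<alpha>" and p0: "p 0 = xi" and \<alpha>0: "\<alpha> 0 = ai" and pL: "p L = xf"
    and cL: "cis (\<alpha> L) = cis af"
    using assms(2) unfolding three_point_optimal_def three_point_feasible_def by auto
  have opt: "\<And>L' p' \<alpha>'. three_point_feasible R xi ai xm xf af L' p' \<alpha>' \<Longrightarrow> L \<le> L'"
    using assms(2) unfolding three_point_optimal_def by auto
  have tt: "0 < t1 \<and> t1 < t2 \<and> t2 < t3 \<and> t3 < t4 \<and> t4 < L"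
    using assms(3) unfolding type_CSCSC_def by blast
  obtain s1 where s1: "s1 \<in> {-1,1}" "\<And>t. t \<in> {0..t1} \<Longrightarrow> \<alpha> t = \<alpha> 0 + s1 * t / R"
    using assms(3) unfolding type_CSCSC_def by blast
  have seg2: "\<And>t. t \<in> {t1..t2} \<Longrightarrow> \<alpha> t = \<alpha> t1" using assms(3) unfolding type_CSCSC_def by blast
  obtain s3 where s3: "s3 \<in> {-1,1}" "\<And>t. t \<in> {t2..t3} \<Longrightarrow> \<alpha> t = \<alpha> t2 + s3 * (t - t2) / R"
    using assms(3) unfolding type_CSCSC_def by blast
  have seg4: "\<And>t. t \<in> {t3..t4} \<Longrightarrow> \<alpha> t = \<alpha> t3" using assms(3) unfolding type_CSCSC_def by blast
  obtain s5 where s5: "s5 \<in> {-1,1}" "\<And>t. t \<in> {t4..L} \<Longrightarrow> \<alpha> t = \<alpha> t4 + s5 * (t - t4) / R"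
    using assms(3) unfolding type_CSCSC_def by blast
  obtain tm where tm: "tm \<in> {t2<..<t3}" "p tm = xm"
    using assms(3) unfolding type_CSCSC_def by blast
  have ss: "s1 * s1 = 1" "s3 * s3 = 1" "s5 * s5 = 1" using s1 s3 s5 sgn_sq by auto
  have ssx: "s1 * (s1 * x) = x" "s3 * (s3 * x) = x" "s5 * (s5 * x) = x" for x
    using ss by (simp_all add: mult.assoc[symmetric])
  define a0 where "a0 = ai"
  define b1 where "b1 = \<alpha> t1"
  define b3 where "b3 = \<alpha> t3"
  have hb1: "b1 = a0 + s1 * t1 / R" unfolding b1_def a0_def using s1(2)[of t1] tt \<alpha>0 by auto
  have \<alpha>t2: "\<alpha> t2 = b1" unfolding b1_def using seg2[of t2] tt by auto
  have hb3: "b3 = b1 + s3 * (t3 - t2) / R" unfolding b3_def using s3(2)[of t3] tt \<alpha>t2 by auto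
  have \<alpha>t4: "\<alpha> t4 = b3" unfolding b3_def using seg4[of t4] tt by auto
  have \<alpha>L: "\<alpha> L = b3 + s5 * (L - t4) / R" using s5(2)[of L] tt \<alpha>t4 by auto
  have s1': "\<And>t. t \<in> {0..t1} \<Longrightarrow> \<alpha> t = a0 + s1 * (t - 0) / R" using s1(2) \<alpha>0 a0_def by (metis diff_zero)
  have s3': "\<And>t. t \<in> {t2..t3} \<Longrightarrow> \<alpha> t = b1 + s3 * (t - t2) / R" by (metis \<alpha>t2 s3(2))
  have s5': "\<And>t. t \<in> {t4..L} \<Longrightarrow> \<alpha> t = b3 + s5 * (t - t4) / R" by (metis \<alpha>t4 s5(2))
  have seg2': "\<And>t. t \<in> {t1..t2} \<Longrightarrow> \<alpha> t = b1" using seg2 b1_def by metis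
  have seg4': "\<And>t. t \<in> {t3..t4} \<Longrightarrow> \<alpha> t = b3" using seg4 b3_def by metis
  define g0 where "g0 = b1 + s3 * (tm - t2) / R"
  have q1: "p t1 - p 0 = - (of_real (s1*R) * \<i>) * (cis (a0 + s1*(t1-0)/R) - cis a0)"
    by (rule arc_piece[OF dp _ _ _ s1(1) R0]) (use tt s1' in auto)
  have q2: "p t2 - p t1 = of_real (t2 - t1) * cis b1"
    by (rule seg_piece[OF dp]) (use tt seg2' in auto)
  have qm: "p tm - p t2 = - (of_real (s3*R) * \<i>) * (cis (b1 + s3*(tm-t2)/R) - cis b1)"
    by (rule arc_piece[OF dp _ _ _ s3(1) R0]) (use tt tm s3' in auto)
  have q3: "p t3 - p t2 = - (of_real (s3*R) * \<i>) * (cis (b1 + s3*(t3-t2)/R) - cis b1)"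
    by (rule arc_piece[OF dp _ _ _ s3(1) R0]) (use tt s3' in auto)
  have q4: "p t4 - p t3 = of_real (t4 - t3) * cis b3"
    by (rule seg_piece[OF dp]) (use tt seg4' in auto)
  have q5: "p L - p t4 = - (of_real (s5*R) * \<i>) * (cis (b3 + s5*(L-t4)/R) - cis b3)"
    by (rule arc_piece[OF dp _ _ _ s5(1) R0]) (use tt s5' in auto)
  define O1 where "O1 = xi + of_real (s1*R) * \<i> * cis a0"
  define O3 where "O3 = p t2 + of_real (s3*R) * \<i> * cis b1"
  define O5 where "O5 = xf + of_real (s5*R) * \<i> * cis (\<alpha> L)"
  define l2 where "l2 = t2 - t1"
  define l4 where "l4 = t4 - t3"
  define k2 where "k2 = (s3 - s1) * R"
  define k4 where "k4 = (s5 - s3) * R"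
  have pt1: "p t1 = xi - (of_real (s1*R) * \<i>) * (cis b1 - cis a0)"
  proof -
    have e: "a0 + s1*(t1-0)/R = b1" using hb1 by simp
    have "p t1 = p 0 + (p t1 - p 0)" by simp
    also have "\<dots> = xi - (of_real (s1*R) * \<i>) * (cis b1 - cis a0)" by (simp only: q1 e) (simp add: p0)
    finally show ?thesis .
  qed
  have pt2: "p t2 = p t1 + of_real l2 * cis b1" using q2 unfolding l2_def by (simp add: algebra_simps)
  have F1: "O3 - O1 = (of_real l2 + \<i> * of_real k2) * cis b1"
    unfolding O3_def O1_def pt2 pt1 k2_def by (simp add: algebra_simps)
  have F3: "xm = O3 - of_real (s3*R) * \<i> * cis g0"
  proof -
    have "xm = p t2 + (p tm - p t2)" using tm by simp
    also have "\<dots> = O3 - of_real (s3*R) * \<i> * cis g0" by (simp only: qm g0_def[symmetric]) (simp add: O3_def algebra_simps)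
    finally show ?thesis .
  qed
  have pt3: "p t3 = O3 - of_real (s3*R) * \<i> * cis b3"
  proof -
    have "p t3 = p t2 + (p t3 - p t2)" by simp
    also have "\<dots> = O3 - of_real (s3*R) * \<i> * cis b3" by (simp only: q3 hb3[symmetric]) (simp add: O3_def algebra_simps)
    finally show ?thesis .
  qed
  have pt4: "p t4 = p t3 + of_real l4 * cis b3" using q4 unfolding l4_def by (simp add: algebra_simps)
  have O5': "O5 = p t4 + of_real (s5*R) * \<i> * cis b3"
  proof -
    have "xf = p t4 + (p L - p t4)" using pL by simp
    also have "\<dots> = p t4 - (of_real (s5*R) * \<i>) * (cis (\<alpha> L) - cis b3)" by (simp only: q5 \<alpha>L[symmetric]) simp
    finally show ?thesis unfolding O5_def by (simp add: algebra_simps)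
  qed
  have F2: "O5 - O3 = (of_real l4 + \<i> * of_real k4) * cis b3"
    unfolding O5' pt4 pt3 k4_def by (simp add: algebra_simps)
  define A where "A = O3 - xm"
  have A: "A = of_real (s3*R) * \<i> * cis g0" unfolding A_def using F3 by simp
  have cA: "cmod A = R" unfolding A using s3(1) R by (auto simp: norm_mult)
  define D2 where "D2 = (\<lambda>e. (xm - O1) + cis e * A)"
  define D4 where "D4 = (\<lambda>e. (O5 - xm) - cis e * A)"
  have D20: "D2 0 = (of_real l2 + \<i> * of_real k2) * cis b1" unfolding D2_def A_def using F1 by (simp add: algebra_simps)
  have D40: "D4 0 = (of_real l4 + \<i> * of_real k4) * cis b3" unfolding D4_def A_def using F2 by (simp add: algebra_simps)
  have l2p: "l2 > 0" and l4p: "l4 > 0" using tt unfolding l2_def l4_def by auto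
  have nlk: "cmod ((of_real l + \<i> * of_real k) * cis b) = sqrt (l^2 + k^2)" for l k b
    by (simp only: norm_mult norm_cis mult_1_right) (simp add: cmod_def)
  have n2: "(cmod (D2 0))^2 = l2^2 + k2^2" unfolding D20 nlk by simp
  have n4: "(cmod (D4 0))^2 = l4^2 + k4^2" unfolding D40 nlk by simp
  have pos2: "(cmod (D2 0))^2 - k2^2 > 0" using n2 l2p by simp
  have pos4: "(cmod (D4 0))^2 - k4^2 > 0" using n4 l4p by simp
  define L2 where "L2 = (\<lambda>e. sqrt ((cmod (D2 e))^2 - k2^2))"
  define L4 where "L4 = (\<lambda>e. sqrt ((cmod (D4 e))^2 - k4^2))"
  have L20: "L2 0 = l2" unfolding L2_def n2 using l2p by simp
  have L40: "L4 0 = l4" unfolding L4_def n4 using l4p by simp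
  define w2 where "w2 = D2 0 / (of_real (L2 0) + \<i> * of_real k2)"
  define w4 where "w4 = D4 0 / (of_real (L4 0) + \<i> * of_real k4)"
  have nz2: "of_real l2 + \<i> * of_real k2 \<noteq> 0" using l2p by (simp add: complex_eq_iff)
  have nz4: "of_real l4 + \<i> * of_real k4 \<noteq> 0" using l4p by (simp add: complex_eq_iff)
  have w2: "w2 = cis b1" unfolding w2_def L20 D20 using nz2 by simp
  have w4: "w4 = cis b3" unfolding w4_def L40 D40 using nz4 by simp
  define Q2 where "Q2 = (\<lambda>e. D2 e / ((of_real (L2 e) + \<i> * of_real k2) * w2))"
  define Q4 where "Q4 = (\<lambda>e. D4 e / ((of_real (L4 e) + \<i> * of_real k4) * w4))"
  define d2 where "d2 = (\<lambda>e. arctan (Im (Q2 e) / Re (Q2 e)))"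
  define d4 where "d4 = (\<lambda>e. arctan (Im (Q4 e) / Re (Q4 e)))"
  have Q20: "Q2 0 = 1" unfolding Q2_def L20 w2 D20 using nz2 by simp
  have Q40: "Q4 0 = 1" unfolding Q4_def L40 w4 D40 using nz4 by simp
  have d20: "d2 0 = 0" unfolding d2_def Q20 by simp
  have d40: "d4 0 = 0" unfolding d4_def Q40 by simp
  have dD2: "(D2 has_vector_derivative (\<i> * A)) (at 0)" unfolding D2_def by (rule rot_deriv)
  have dD4: "(D4 has_vector_derivative (- (\<i> * A))) (at 0)" unfolding D4_def by (rule rot_deriv')
  have der2: "((\<lambda>e. L2 e - k2 * d2 e) has_real_derivative Re (cnj w2 * (\<i> * A))) (at 0)"
    unfolding L2_def d2_def Q2_def w2_def L2_def by (rule tan_deriv_c[OF dD2 pos2])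
  have der4: "((\<lambda>e. L4 e - k4 * d4 e) has_real_derivative Re (cnj w4 * (- (\<i> * A)))) (at 0)"
    unfolding L4_def d4_def Q4_def w4_def L4_def by (rule tan_deriv_c[OF dD4 pos4])
  define Fn where "Fn = (\<lambda>e. (L2 e - k2 * d2 e) + (L4 e - k4 * d4 e))"
  have derF: "(Fn has_real_derivative (Re (cnj w2 * (\<i> * A)) + Re (cnj w4 * (- (\<i> * A))))) (at 0)"
    unfolding Fn_def by (rule DERIV_add[OF der2 der4])
  have key: "Fn 0 \<le> Fn e"
    if c1: "(cmod (D2 e))^2 - k2^2 > 0" and c2: "(cmod (D4 e))^2 - k4^2 > 0"
      and c3: "Re (Q2 e) > 0" and c4: "Re (Q4 e) > 0"
      and c5: "t1 + s1*R*d2 e > 0" and c6: "(tm - t2) + s3*R*(e - d2 e) > 0"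
      and c7: "(t3 - t2) + s3*R*(d4 e - d2 e) - ((tm - t2) + s3*R*(e - d2 e)) > 0"
      and c8: "(L - t4) - s5*R*d4 e > 0" for e
  proof -
    define T1 where "T1 = t1 + s1*R*d2 e"
    define T3 where "T3 = (t3 - t2) + s3*R*(d4 e - d2 e)"
    define T5 where "T5 = (L - t4) - s5*R*d4 e"
    define \<mu> where "\<mu> = (tm - t2) + s3*R*(e - d2 e)"
    define O3e where "O3e = xm + cis e * A"
    have td2: "D2 e = (of_real (L2 e) + \<i> * of_real k2) * (w2 * cis (d2 e))" "L2 e > 0"
      using tangent_data[of "D2 e" k2 w2] c1 c3 unfolding L2_def d2_def Q2_def w2 by auto
    have td4: "D4 e = (of_real (L4 e) + \<i> * of_real k4) * (w4 * cis (d4 e))" "L4 e > 0"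
      using tangent_data[of "D4 e" k4 w4] c2 c4 unfolding L4_def d4_def Q4_def w4 by auto
    have h2: "O3e - O1 = (of_real (L2 e) + \<i> * of_real ((s3 - s1)*R)) * cis (b1 + d2 e)"
      using td2(1) unfolding O3e_def D2_def k2_def w2 cis_mult by (simp add: algebra_simps)
    have h4: "O5 - O3e = (of_real (L4 e) + \<i> * of_real ((s5 - s3)*R)) * cis (b3 + d4 e)"
      using td4(1) unfolding O3e_def D4_def k4_def w4 cis_mult by (simp add: algebra_simps)
    have hx: "xm = O3e - of_real (s3*R) * \<i> * cis (g0 + e)"
      unfolding O3e_def A cis_mult[symmetric] by (simp add: algebra_simps)
    have hb2: "b1 + d2 e = a0 + s1 * T1 / R" unfolding T1_def hb1 using R ss by (simp add: field_simps ssx)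
    have hb4: "b3 + d4 e = (b1 + d2 e) + s3 * T3 / R" unfolding T3_def hb3 using R ss by (simp add: field_simps ssx)
    have hcf: "\<alpha> L = (b3 + d4 e) + s5 * T5 / R" unfolding T5_def \<alpha>L using R ss by (simp add: field_simps ssx)
    have hg: "g0 + e = (b1 + d2 e) + s3 * \<mu> / R" unfolding \<mu>_def g0_def using R ss by (simp add: field_simps ssx)
    have nn: "0 \<le> T1" "0 \<le> L2 e" "0 \<le> T3" "0 \<le> L4 e" "0 \<le> T5" "0 \<le> \<mu>" "\<mu> \<le> T3"
      using c5 c6 c7 c8 td2(2) td4(2) unfolding T1_def T3_def T5_def \<mu>_def by auto
    obtain P' \<beta>' where "three_point_feasible R xi a0 xm xf af (T1 + L2 e + T3 + L4 e + T5) P' \<beta>'"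
      using build_path[OF R s1(1) s3(1) s5(1) O1_def O5_def h2 h4 hx nn(1-5) hb2 hb4 hcf hg nn(6,7) cL] by blast
    hence "L \<le> T1 + L2 e + T3 + L4 e + T5" using opt unfolding a0_def by blast
    moreover have "Fn 0 = l2 + l4" unfolding Fn_def L20 L40 d20 d40 by simp
    moreover have "T1 + L2 e + T3 + L4 e + T5 = L - l2 - l4 + Fn e"
      unfolding T1_def T3_def T5_def Fn_def l2_def l4_def k2_def k4_def by (simp add: algebra_simps)
    ultimately show ?thesis by simp
  qed
  have cD2: "isCont D2 0" unfolding D2_def cis_conv_exp by (intro continuous_intros)
  have cD4: "isCont D4 0" unfolding D4_def cis_conv_exp by (intro continuous_intros)
  have cL2: "isCont L2 0" unfolding L2_def by (intro continuous_intros cD2)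
  have cL4: "isCont L4 0" unfolding L4_def by (intro continuous_intros cD4)
  have cQ2: "isCont Q2 0" unfolding Q2_def
    by (intro continuous_intros cD2 cL2) (use nz2 in \<open>auto simp: L20 w2\<close>)
  have cQ4: "isCont Q4 0" unfolding Q4_def
    by (intro continuous_intros cD4 cL4) (use nz4 in \<open>auto simp: L40 w4\<close>)
  have cd2: "isCont d2 0" unfolding d2_def
    by (intro continuous_intros isCont_Re isCont_Im cQ2) (auto simp: Q20)
  have cd4: "isCont d4 0" unfolding d4_def
    by (intro continuous_intros isCont_Re isCont_Im cQ4) (auto simp: Q40)
  have ev1: "eventually (\<lambda>e. (cmod (D2 e))^2 - k2^2 > 0) (at 0)"
    by (rule ev_pos) (use pos2 in \<open>auto intro!: continuous_intros cD2\<close>)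
  have ev2: "eventually (\<lambda>e. (cmod (D4 e))^2 - k4^2 > 0) (at 0)"
    by (rule ev_pos) (use pos4 in \<open>auto intro!: continuous_intros cD4\<close>)
  have ev3: "eventually (\<lambda>e. Re (Q2 e) > 0) (at 0)"
    by (rule ev_pos) (use Q20 in \<open>auto intro!: continuous_intros isCont_Re cQ2\<close>)
  have ev4: "eventually (\<lambda>e. Re (Q4 e) > 0) (at 0)"
    by (rule ev_pos) (use Q40 in \<open>auto intro!: continuous_intros isCont_Re cQ4\<close>)
  have ev5: "eventually (\<lambda>e. t1 + s1*R*d2 e > 0) (at 0)"
    by (rule ev_pos) (use d20 tt in \<open>auto intro!: continuous_intros cd2\<close>)
  have ev6: "eventually (\<lambda>e. (tm - t2) + s3*R*(e - d2 e) > 0) (at 0)"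
    by (rule ev_pos) (use d20 tm in \<open>auto intro!: continuous_intros cd2\<close>)
  have ev7: "eventually (\<lambda>e. (t3 - t2) + s3*R*(d4 e - d2 e) - ((tm - t2) + s3*R*(e - d2 e)) > 0) (at 0)"
    by (rule ev_pos) (use d20 d40 tm in \<open>auto intro!: continuous_intros cd2 cd4\<close>)
  have ev8: "eventually (\<lambda>e. (L - t4) - s5*R*d4 e > 0) (at 0)"
    by (rule ev_pos) (use d40 tt in \<open>auto intro!: continuous_intros cd4\<close>)
  have "eventually (\<lambda>e. Fn 0 \<le> Fn e) (at 0)"
    using ev1 ev2 ev3 ev4 ev5 ev6 ev7 ev8
    by eventually_elim (rule key)
  then obtain d where d: "d > 0" "\<And>x. x \<noteq> 0 \<Longrightarrow> dist x 0 < d \<Longrightarrow> Fn 0 \<le> Fn x"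
    unfolding eventually_at by auto
  have "\<forall>y. \<bar>0 - y\<bar> < d \<longrightarrow> Fn 0 \<le> Fn y"
  proof (intro allI impI)
    fix y :: real assume "\<bar>0 - y\<bar> < d"
    thus "Fn 0 \<le> Fn y" using d(2)[of y] by (cases "y = 0") (auto simp: dist_real_def)
  qed
  have FD: "Re (cnj w2 * (\<i> * A)) + Re (cnj w4 * (- (\<i> * A))) = 0"
    by (rule DERIV_local_min[OF derF d(1) \<open>\<forall>y. _\<close>])
  define B2 where "B2 = Im (cnj (cis b1) * (p t1 - xm))"
  define B4 where "B4 = Im (cnj (cis b3) * (p t3 - xm))"
  have cc: "cnj (cis b) * cis b = 1" for b by (simp add: cis_cnj cis_mult)
  have e1: "p t1 - xm = A - of_real (s3*R) * \<i> * cis b1 - of_real l2 * cis b1"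
    using pt2 unfolding A_def O3_def by (simp add: algebra_simps)
  have B2: "B2 = Im (cnj (cis b1) * A) - s3 * R"
  proof -
    have "cnj (cis b1) * (p t1 - xm) = cnj (cis b1) * A - (of_real (s3*R) * \<i> + of_real l2) * (cnj (cis b1) * cis b1)"
      unfolding e1 by (simp add: algebra_simps)
    thus ?thesis unfolding B2_def cc by simp
  qed
  have B4: "B4 = Im (cnj (cis b3) * A) - s3 * R"
  proof -
    have "cnj (cis b3) * (p t3 - xm) = cnj (cis b3) * A - (of_real (s3*R) * \<i>) * (cnj (cis b3) * cis b3)"
      unfolding pt3 A_def by (simp add: algebra_simps)
    thus ?thesis unfolding B4_def cc by simp
  qed
  have ImRe: "Re (cnj w * (\<i> * z)) = - Im (cnj w * z)" "Re (cnj w * (- (\<i> * z))) = Im (cnj w * z)" for w z :: complex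
    by simp_all
  have B24: "B4 = B2" using FD unfolding ImRe w2 w4 B2 B4 by simp
  have deg: "A = of_real (s3*R) * \<i> * cis b" if "Im (cnj (cis b) * A) = s3 * R" for b
  proof -
    define Z where "Z = cnj (cis b) * A"
    have zi: "Im Z = s3 * R" using that unfolding Z_def .
    have "cmod Z = R" unfolding Z_def using cA by (simp add: norm_mult)
    hence "(Re Z)^2 + (Im Z)^2 = R^2" using cmod_power2[of Z] by simp
    hence "(Re Z)^2 = 0" using zi ss by (simp add: power2_eq_square algebra_simps)
    hence "Z = of_real (s3*R) * \<i>" using zi by (simp add: complex_eq_iff)
    hence "cis b * (cnj (cis b) * A) = cis b * (of_real (s3*R) * \<i>)" unfolding Z_def by simp
    hence "(cnj (cis b) * cis b) * A = cis b * (of_real (s3*R) * \<i>)" by (simp add: algebra_simps)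
    thus ?thesis unfolding cc by (simp add: algebra_simps)
  qed
  have B2nz: "B2 \<noteq> 0"
  proof
    assume B20: "B2 = 0"
    hence Ab1: "A = of_real (s3*R) * \<i> * cis b1" using deg B2 by simp
    have "A = of_real (s3*R) * \<i> * cis b3" using deg B4 B20 B24 by simp
    hence cb: "cis b3 = cis b1" using Ab1 R s3(1) by auto
    define cf where "cf = b1 + s5*(L-t4)/R"
    have ccf: "cis cf = cis (\<alpha> L)" unfolding cf_def \<alpha>L cis_mult[symmetric] cb ..
    have O5b: "O5 = xf + of_real (s5*R) * \<i> * cis cf" unfolding O5_def ccf ..
    have h2: "O3 - O1 = (of_real l2 + \<i> * of_real ((s3 - s1)*R)) * cis b1" using F1 unfolding k2_def .
    have h4: "O5 - O3 = (of_real l4 + \<i> * of_real ((s5 - s3)*R)) * cis b1" using F2 unfolding k4_def cb .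
    have hx: "xm = O3 - of_real (s3*R) * \<i> * cis b1" using Ab1 unfolding A_def by (metis diff_diff_eq2 diff_add_cancel add_diff_cancel_left')
    have nn: "0 \<le> t1" "0 \<le> l2" "0 \<le> (0::real)" "0 \<le> l4" "0 \<le> L - t4" using tt l2p l4p by auto
    have hb2: "b1 = a0 + s1 * t1 / R" by (rule hb1)
    have hb4: "b1 = b1 + s3 * 0 / R" by simp
    have hcf: "cf = b1 + s5 * (L - t4) / R" by (rule cf_def)
    have hg: "b1 = b1 + s3 * 0 / R" by simp
    have ccf': "cis cf = cis af" using ccf cL by simp
    obtain P' \<beta>' where "three_point_feasible R xi a0 xm xf af (t1 + l2 + 0 + l4 + (L - t4)) P' \<beta>'"
      using build_path[OF R s1(1) s3(1) s5(1) O1_def O5b h2 h4 hx nn hb2 hb4 hcf hg _ _ ccf'] by auto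
    hence "L \<le> t1 + l2 + 0 + l4 + (L - t4)" using opt unfolding a0_def by blast
    thus False using tt unfolding l2_def l4_def by simp
  qed
  have inv2: "inverse_set xm R (line_through (p t1) (\<alpha> t1)) = sphere (xm + cis b1 * (\<i> * of_real (R^2/(2*B2)))) (R^2/(2*\<bar>B2\<bar>)) - {xm}"
    unfolding b1_def[symmetric] by (rule inv_line[OF R B2_def B2nz])
  have inv4: "inverse_set xm R (line_through (p t3) (\<alpha> t3)) = sphere (xm + cis b3 * (\<i> * of_real (R^2/(2*B4)))) (R^2/(2*\<bar>B4\<bar>)) - {xm}"
    unfolding b3_def[symmetric] by (rule inv_line[OF R B4_def]) (use B2nz B24 in simp)
  have "0 < R^2/(2*\<bar>B2\<bar>)" using R B2nz by simp
  thus ?thesis using inv2 inv4 unfolding B24 by blast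
qed


end
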